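(* Let $X$ be a finite set. (i) If $F$ is a set of permutations of $X$, then $\langle F\rangle_G=\mathrm{Aut}(\mathrm{Inv}(F))$. (ii) If $F$ is a set of multipermutations on $X$, then $\langle F\rangle_{DSM}=\mathrm{shE}(\mathrm{Inv}(F))$.
   Context: A multipermutation on $X$ is a map $f:X\to\mathcal{P}(X)\setminus\{\emptyset\}$ such that every $y\in X$ lies in $f(x)$ for some $x$; permutations are identified with multipermutations with singleton images. A multipermutation $f$ preserves a relation $R\subseteq X^i$ if $(x_1,\dots,x_i)\in R$ and $y_j\in f(x_j)$ for all $j$ imply $(y_1,\dots,y_i)\in R$. $\mathrm{Inv}(F)$ is the set of all relations on $X$ (of all finite arities) preserved by every member of $F$, regarded as a relational structure on $X$. For a structure $\mathcal{C}$ on $X$, $\mathrm{Aut}(\mathcal{C})$ is its set of automorphisms and $\mathrm{shE}(\mathcal{C})$ is the set of multipermutations on $X$ preserving all relations of $\mathcal{C}$. The identity multipermutation is $x\mapsto\{x\}$; the composition $g\circ f$ is $x\mapsto\{z:\exists y\,(y\in f(x)\wedge z\in g(y))\}$; $f$ is a sub-multipermutation of $g$ if $f(x)\subseteq g(x)$ for all $x$. A down-shop-monoid (DSM) on $X$ is a set of multipermutations on $X$ containing the identity and closed under composition and under taking sub-multipermutations (that are themselves multipermutations). $\langle F\rangle_{DSM}$ is the smallest DSM containing $F$, and $\langle F\rangle_G$ is the permutation group generated by $F$. *)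

theory Defs
  imports "HOL-Combinatorics.Permutations"
begin

text \<open>A relation of arity n on X is a pair (n, R) with R a set of lists
  of length n over X; a relational structure is a set of such pairs.\<close>

definition multiperm :: "'a set \<Rightarrow> ('a \<Rightarrow> 'a set) \<Rightarrow> bool" where
  "multiperm X f \<longleftrightarrow>
     (\<forall>x\<in>X. f x \<noteq> {} \<and> f x \<subseteq> X) \<and> (\<forall>x. x \<notin> X \<longrightarrow> f x = {}) \<and>
     (\<forall>y\<in>X. \<exists>x\<in>X. y \<in> f x)"

definition tuples :: "'a set \<Rightarrow> nat \<Rightarrow> 'a list set" where
  "tuples X n = {xs. length xs = n \<and> set xs \<subseteq> X}"

definition is_rel :: "'a set \<Rightarrow> nat \<times> 'a list set \<Rightarrow> bool" where
  "is_rel X nR \<longleftrightarrow> snd nR \<subseteq> tuples X (fst nR)"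

definition mp_preserves :: "('a \<Rightarrow> 'a set) \<Rightarrow> 'a list set \<Rightarrow> bool" where
  "mp_preserves f R \<longleftrightarrow>
     (\<forall>xs ys. xs \<in> R \<and> list_all2 (\<lambda>x y. y \<in> f x) xs ys \<longrightarrow> ys \<in> R)"

definition perm_to_mp :: "'a set \<Rightarrow> ('a \<Rightarrow> 'a) \<Rightarrow> 'a \<Rightarrow> 'a set" where
  "perm_to_mp X \<sigma> = (\<lambda>x. if x \<in> X then {\<sigma> x} else {})"

definition Inv :: "'a set \<Rightarrow> ('a \<Rightarrow> 'a set) set \<Rightarrow> (nat \<times> 'a list set) set" where
  "Inv X F = {nR. is_rel X nR \<and> (\<forall>f\<in>F. mp_preserves f (snd nR))}"

definition Aut :: "'a set \<Rightarrow> (nat \<times> 'a list set) set \<Rightarrow> ('a \<Rightarrow> 'a) set" where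
  "Aut X C = {\<sigma>. \<sigma> permutes X \<and>
     (\<forall>nR\<in>C. \<forall>xs\<in>tuples X (fst nR). xs \<in> snd nR \<longleftrightarrow> map \<sigma> xs \<in> snd nR)}"

definition shE :: "'a set \<Rightarrow> (nat \<times> 'a list set) set \<Rightarrow> ('a \<Rightarrow> 'a set) set" where
  "shE X C = {f. multiperm X f \<and> (\<forall>nR\<in>C. mp_preserves f (snd nR))}"

definition mp_id :: "'a set \<Rightarrow> 'a \<Rightarrow> 'a set" where
  "mp_id X = (\<lambda>x. if x \<in> X then {x} else {})"

definition mp_comp :: "('a \<Rightarrow> 'a set) \<Rightarrow> ('a \<Rightarrow> 'a set) \<Rightarrow> 'a \<Rightarrow> 'a set" where
  "mp_comp g f = (\<lambda>x. {z. \<exists>y. y \<in> f x \<and> z \<in> g y})"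

definition DSM :: "'a set \<Rightarrow> ('a \<Rightarrow> 'a set) set \<Rightarrow> bool" where
  "DSM X M \<longleftrightarrow> (\<forall>f\<in>M. multiperm X f) \<and> mp_id X \<in> M \<and>
     (\<forall>f\<in>M. \<forall>g\<in>M. mp_comp g f \<in> M) \<and>
     (\<forall>g\<in>M. \<forall>f. multiperm X f \<and> (\<forall>x. f x \<subseteq> g x) \<longrightarrow> f \<in> M)"

definition DSM_gen :: "'a set \<Rightarrow> ('a \<Rightarrow> 'a set) set \<Rightarrow> ('a \<Rightarrow> 'a set) set" where
  "DSM_gen X F = \<Inter> {M. DSM X M \<and> F \<subseteq> M}"

inductive_set group_gen :: "'a set \<Rightarrow> ('a \<Rightarrow> 'a) set \<Rightarrow> ('a \<Rightarrow> 'a) set"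
  for X :: "'a set" and F :: "('a \<Rightarrow> 'a) set" where
  gen_id: "id \<in> group_gen X F"
| gen_base: "\<sigma> \<in> F \<Longrightarrow> \<sigma> \<in> group_gen X F"
| gen_comp: "\<sigma> \<in> group_gen X F \<Longrightarrow> \<tau> \<in> group_gen X F \<Longrightarrow> \<sigma> \<circ> \<tau> \<in> group_gen X F"
| gen_inv: "\<sigma> \<in> group_gen X F \<Longrightarrow> inv \<sigma> \<in> group_gen X F"

end

theory Submission
  imports Defs
begin

lemma gg_permutes:
  assumes "\<forall>\<sigma>\<in>F. \<sigma> permutes X" "g \<in> group_gen X F"
  shows "g permutes X"
  using assms(2)
proof (induction rule: group_gen.induct)
  case gen_id then show ?case by (rule permutes_id)
next
  case (gen_base \<sigma>) then show ?case using assms(1) by blast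
next
  case (gen_comp \<sigma> \<tau>) then show ?case by (metis permutes_compose)
next
  case (gen_inv \<sigma>) then show ?case by (simp add: permutes_inv)
qed

lemma la2_fun:
  assumes "list_all2 P xs ys" "\<forall>x\<in>set xs. \<forall>y. P x y \<longleftrightarrow> y = h x"
  shows "ys = map h xs"
  using assms
proof (induction xs arbitrary: ys)
  case Nil then show ?case by simp
next
  case (Cons a xs)
  then show ?case by (cases ys) auto
qed

lemma perm_mp_la2:
  assumes "set xs \<subseteq> X"
  shows "list_all2 (\<lambda>x y. y \<in> perm_to_mp X \<sigma> x) xs ys \<longleftrightarrow> ys = map \<sigma> xs"
proof
  assume "list_all2 (\<lambda>x y. y \<in> perm_to_mp X \<sigma> x) xs ys"
  then show "ys = map \<sigma> xs"
    by (rule la2_fun) (use assms in \<open>auto simp: perm_to_mp_def\<close>)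
next
  assume "ys = map \<sigma> xs"
  then show "list_all2 (\<lambda>x y. y \<in> perm_to_mp X \<sigma> x) xs ys"
    using assms by (auto simp: perm_to_mp_def list_all2_conv_all_nth dest: nth_mem)
qed

lemma map_perm_tuples:
  assumes "g permutes X" "xs \<in> tuples X n"
  shows "map g xs \<in> tuples X n"
  using assms by (auto simp: tuples_def permutes_in_image)

lemma perm_rel_iff:
  assumes fin: "finite X" and p: "\<sigma> permutes X" and R: "R \<subseteq> tuples X n"
    and pres: "\<forall>xs\<in>R. map \<sigma> xs \<in> R"
  shows "\<forall>xs\<in>tuples X n. xs \<in> R \<longleftrightarrow> map \<sigma> xs \<in> R"
proof -
  have inj: "inj \<sigma>" using p by (simp add: permutes_inj)
  have injm: "inj (map \<sigma>)" using inj by (simp add: inj_mapI)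
  have finT: "finite (tuples X n)"
    using finite_lists_length_eq[OF fin, of n]
    by (simp add: tuples_def conj_commute)
  have finR: "finite R" using R finT finite_subset by blast
  have sub: "map \<sigma> ` R \<subseteq> R" using pres by auto
  have "card (map \<sigma> ` R) = card R"
    using injm by (meson card_image inj_on_subset subset_UNIV)
  then have eq: "map \<sigma> ` R = R" using card_subset_eq[OF finR sub] by simp
  show ?thesis
  proof
    fix xs assume "xs \<in> tuples X n"
    show "xs \<in> R \<longleftrightarrow> map \<sigma> xs \<in> R"
    proof
      assume "xs \<in> R" then show "map \<sigma> xs \<in> R" using pres by blast
    next
      assume "map \<sigma> xs \<in> R"
      then have "map \<sigma> xs \<in> map \<sigma> ` R" using eq by simp
      then obtain ys where "ys \<in> R" "map \<sigma> xs = map \<sigma> ys" by auto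
      then show "xs \<in> R" using injm by (metis injD)
    qed
  qed
qed

lemma part1:
  assumes fin: "finite X" and F: "\<forall>\<sigma>\<in>F. \<sigma> permutes X"
  shows "group_gen X F = Aut X (Inv X (perm_to_mp X ` F))"
proof
  show "group_gen X F \<subseteq> Aut X (Inv X (perm_to_mp X ` F))"
  proof
    fix g assume g: "g \<in> group_gen X F"
    have "\<forall>xs\<in>tuples X (fst nR). xs \<in> snd nR \<longleftrightarrow> map g xs \<in> snd nR"
      if nR: "nR \<in> Inv X (perm_to_mp X ` F)" for nR
    proof -
      obtain n R where nR_eq: "nR = (n, R)" by force
      have R: "R \<subseteq> tuples X n" using nR nR_eq by (simp add: Inv_def is_rel_def)
      have pres: "\<forall>\<sigma>\<in>F. mp_preserves (perm_to_mp X \<sigma>) R"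
        using nR nR_eq by (simp add: Inv_def)
      have base: "\<forall>xs\<in>tuples X n. xs \<in> R \<longleftrightarrow> map \<sigma> xs \<in> R" if s: "\<sigma> \<in> F" for \<sigma>
      proof (rule perm_rel_iff[OF fin _ R])
        show "\<sigma> permutes X" using F s by blast
        show "\<forall>xs\<in>R. map \<sigma> xs \<in> R"
        proof
          fix xs assume xs: "xs \<in> R"
          then have "set xs \<subseteq> X" using R by (auto simp: tuples_def)
          then have "list_all2 (\<lambda>x y. y \<in> perm_to_mp X \<sigma> x) xs (map \<sigma> xs)"
            using perm_mp_la2 by blast
          then show "map \<sigma> xs \<in> R" using pres s xs unfolding mp_preserves_def by blast
        qed
      qed
      have "g permutes X \<and> (\<forall>xs\<in>tuples X n. xs \<in> R \<longleftrightarrow> map g xs \<in> R)"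
        using g
      proof (induction rule: group_gen.induct)
        case gen_id then show ?case using permutes_id[of X] by (simp add: id_def)
      next
        case (gen_base \<sigma>) then show ?case using base F by blast
      next
        case (gen_comp \<sigma> \<tau>)
        have "xs \<in> R \<longleftrightarrow> map (\<sigma> \<circ> \<tau>) xs \<in> R" if xs: "xs \<in> tuples X n" for xs
        proof -
          have t: "map \<tau> xs \<in> tuples X n" using map_perm_tuples gen_comp.IH(2) xs by blast
          have "map (\<sigma> \<circ> \<tau>) xs = map \<sigma> (map \<tau> xs)" by simp
          then show ?thesis using gen_comp.IH t xs by metis
        qed
        moreover have "\<sigma> \<circ> \<tau> permutes X" using gen_comp.IH by (metis permutes_compose)
        ultimately show ?case by blast
      next
        case (gen_inv \<sigma>)
        have pi: "inv \<sigma> permutes X" using gen_inv permutes_inv by blast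
        have "xs \<in> R \<longleftrightarrow> map (inv \<sigma>) xs \<in> R" if xs: "xs \<in> tuples X n" for xs
        proof -
          have t: "map (inv \<sigma>) xs \<in> tuples X n" using map_perm_tuples[OF pi xs] .
          have "map \<sigma> (map (inv \<sigma>) xs) = xs"
            using gen_inv.IH permutes_inv_o(1)[of \<sigma> X] by simp
          then show ?thesis using gen_inv.IH t by metis
        qed
        then show ?case using pi by blast
      qed
      then show ?thesis using nR_eq by simp
    qed
    moreover have "g permutes X" using gg_permutes[OF F g] .
    ultimately show "g \<in> Aut X (Inv X (perm_to_mp X ` F))" by (simp add: Aut_def)
  qed
next
  show "Aut X (Inv X (perm_to_mp X ` F)) \<subseteq> group_gen X F"
  proof
    fix \<tau> assume \<tau>: "\<tau> \<in> Aut X (Inv X (perm_to_mp X ` F))"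
    obtain xs where xs: "set xs = X" "distinct xs" using finite_distinct_list[OF fin] by blast
    define R where "R = {map g xs | g. g \<in> group_gen X F}"
    have isr: "is_rel X (length xs, R)"
      using gg_permutes[OF F] xs(1)
      by (auto simp: is_rel_def R_def tuples_def permutes_in_image)
    have "mp_preserves (perm_to_mp X \<sigma>) R" if s: "\<sigma> \<in> F" for \<sigma>
      unfolding mp_preserves_def
    proof (intro allI impI)
      fix as bs assume a: "as \<in> R \<and> list_all2 (\<lambda>x y. y \<in> perm_to_mp X \<sigma> x) as bs"
      then obtain g where g: "g \<in> group_gen X F" "as = map g xs" by (auto simp: R_def)
      have "set as \<subseteq> X" using g gg_permutes[OF F g(1)] xs(1)
        by (auto simp: permutes_in_image)
      then have "bs = map \<sigma> as" using a perm_mp_la2 by blast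
      then have "bs = map (\<sigma> \<circ> g) xs" using g by simp
      moreover have "\<sigma> \<circ> g \<in> group_gen X F" using g s by (simp add: group_gen.intros)
      ultimately show "bs \<in> R" unfolding R_def by blast
    qed
    then have inv: "(length xs, R) \<in> Inv X (perm_to_mp X ` F)" using isr by (auto simp: Inv_def)
    have "xs \<in> tuples X (length xs)" using xs by (simp add: tuples_def)
    moreover have "xs \<in> R" unfolding R_def using gen_id[of X F] by force
    ultimately have "map \<tau> xs \<in> R" using \<tau> inv unfolding Aut_def by fastforce
    then obtain g where g: "g \<in> group_gen X F" "map \<tau> xs = map g xs" by (auto simp: R_def)
    have pt: "\<tau> permutes X" using \<tau> by (simp add: Aut_def)
    have pg: "g permutes X" using gg_permutes[OF F g(1)] .
    have "\<tau> x = g x" for x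
    proof (cases "x \<in> X")
      case True then show ?thesis using g(2) xs(1) by (metis map_eq_conv)
    next
      case False then show ?thesis using pt pg by (simp add: permutes_not_in)
    qed
    then have "\<tau> = g" by blast
    then show "\<tau> \<in> group_gen X F" using g by simp
  qed
qed


lemma mp_comp_multiperm:
  assumes "multiperm X f" "multiperm X g"
  shows "multiperm X (mp_comp g f)"
  unfolding multiperm_def
proof (intro conjI ballI allI impI)
  fix x assume x: "x \<in> X"
  then obtain y where y: "y \<in> f x" using assms unfolding multiperm_def by blast
  then have "y \<in> X" using assms x by (auto simp: multiperm_def)
  then obtain z where "z \<in> g y" using assms unfolding multiperm_def by blast
  then show "mp_comp g f x \<noteq> {}" using y by (auto simp: mp_comp_def)
  show "mp_comp g f x \<subseteq> X" using assms x by (auto simp: multiperm_def mp_comp_def)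
next
  fix x assume "x \<notin> X"
  then show "mp_comp g f x = {}" using assms by (auto simp: multiperm_def mp_comp_def)
next
  fix z assume z: "z \<in> X"
  then obtain y where y: "y \<in> X" "z \<in> g y" using assms(2) by (auto simp: multiperm_def)
  then obtain x where x: "x \<in> X" "y \<in> f x" using assms(1) by (auto simp: multiperm_def)
  then show "\<exists>x\<in>X. z \<in> mp_comp g f x" using y by (auto simp: mp_comp_def)
qed

lemma mp_id_multiperm: "multiperm X (mp_id X)"
  by (auto simp: multiperm_def mp_id_def)

lemma comp_rel: "(\<lambda>x z. z \<in> mp_comp g f x) = (\<lambda>x y. y \<in> f x) OO (\<lambda>x y. y \<in> g x)"
  by (auto simp: mp_comp_def fun_eq_iff)

lemma la2_comp:
  assumes "list_all2 (\<lambda>x z. z \<in> mp_comp g f x) xs zs"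
  obtains ys where "list_all2 (\<lambda>x y. y \<in> f x) xs ys" "list_all2 (\<lambda>x y. y \<in> g x) ys zs"
  using assms unfolding comp_rel list.rel_compp by (auto simp: relcompp_apply)

lemma la2_comp2:
  assumes "list_all2 (\<lambda>x y. y \<in> f x) xs ys" "list_all2 (\<lambda>x y. y \<in> g x) ys zs"
  shows "list_all2 (\<lambda>x z. z \<in> mp_comp g f x) xs zs"
  using assms unfolding comp_rel list.rel_compp by (auto simp: relcompp_apply)

lemma shE_DSM: "DSM X (shE X C)"
  unfolding DSM_def
proof (intro conjI ballI allI impI)
  show "\<And>f. f \<in> shE X C \<Longrightarrow> multiperm X f" by (simp add: shE_def)
  show "mp_id X \<in> shE X C"
  proof -
    have "mp_preserves (mp_id X) R" for R
      unfolding mp_preserves_def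
    proof (intro allI impI)
      fix xs ys assume a: "xs \<in> R \<and> list_all2 (\<lambda>x y. y \<in> mp_id X x) xs ys"
      then have "list_all2 (=) xs ys"
        by (rule conjE) (erule list_all2_mono, simp add: mp_id_def split: if_splits)
      then show "ys \<in> R" using a by (simp add: list_all2_eq[symmetric])
    qed
    then show ?thesis by (simp add: shE_def mp_id_multiperm)
  qed
  show "mp_comp g f \<in> shE X C" if "f \<in> shE X C" "g \<in> shE X C" for f g
  proof -
    have "mp_preserves (mp_comp g f) (snd nR)" if n: "nR \<in> C" for nR
      unfolding mp_preserves_def
    proof (intro allI impI)
      fix xs zs assume a: "xs \<in> snd nR \<and> list_all2 (\<lambda>x z. z \<in> mp_comp g f x) xs zs"
      then obtain ys where y: "list_all2 (\<lambda>x y. y \<in> f x) xs ys" "list_all2 (\<lambda>x y. y \<in> g x) ys zs"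
        using la2_comp by blast
      have "ys \<in> snd nR" using a y(1) \<open>f \<in> shE X C\<close> n by (auto simp: shE_def mp_preserves_def)
      then show "zs \<in> snd nR" using y(2) \<open>g \<in> shE X C\<close> n by (auto simp: shE_def mp_preserves_def)
    qed
    then show ?thesis using that by (auto simp: shE_def mp_comp_multiperm)
  qed
  show "f \<in> shE X C" if gs: "g \<in> shE X C" and fs: "multiperm X f \<and> (\<forall>x. f x \<subseteq> g x)" for f g
  proof -
    have "mp_preserves f (snd nR)" if n: "nR \<in> C" for nR
      unfolding mp_preserves_def
    proof (intro allI impI)
      fix xs ys assume a: "xs \<in> snd nR \<and> list_all2 (\<lambda>x y. y \<in> f x) xs ys"
      then have "list_all2 (\<lambda>x y. y \<in> f x) xs ys" by blast
      then have "list_all2 (\<lambda>x y. y \<in> g x) xs ys"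
        by (rule list_all2_mono) (use fs in blast)
      then show "ys \<in> snd nR" using a \<open>g \<in> shE X C\<close> n by (auto simp: shE_def mp_preserves_def)
    qed
    then show ?thesis using fs by (auto simp: shE_def)
  qed
qed

lemma DSM_mp: "DSM X M \<Longrightarrow> g \<in> M \<Longrightarrow> multiperm X g"
  unfolding DSM_def by blast
lemma DSM_id: "DSM X M \<Longrightarrow> mp_id X \<in> M"
  unfolding DSM_def by blast
lemma DSM_comp: "DSM X M \<Longrightarrow> f \<in> M \<Longrightarrow> g \<in> M \<Longrightarrow> mp_comp g f \<in> M"
  unfolding DSM_def by blast
lemma DSM_sub: "DSM X M \<Longrightarrow> g \<in> M \<Longrightarrow> multiperm X f \<Longrightarrow> (\<And>x. f x \<subseteq> g x) \<Longrightarrow> f \<in> M"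
  unfolding DSM_def by blast

lemma part2:
  assumes fin: "finite X" and F: "\<forall>f\<in>F. multiperm X f"
  shows "DSM_gen X F = shE X (Inv X F)"
proof
  have "F \<subseteq> shE X (Inv X F)" using F by (auto simp: shE_def Inv_def)
  then show "DSM_gen X F \<subseteq> shE X (Inv X F)"
    unfolding DSM_gen_def using shE_DSM by blast
next
  show "shE X (Inv X F) \<subseteq> DSM_gen X F"
  proof
    fix f assume f: "f \<in> shE X (Inv X F)"
    have fm: "multiperm X f" using f by (simp add: shE_def)
    show "f \<in> DSM_gen X F"
      unfolding DSM_gen_def
    proof (rule InterI, clarify)
      fix M assume M: "DSM X M" "F \<subseteq> M"
      obtain ps where ps: "set ps = X \<times> X" using finite_list[of "X \<times> X"] fin by blast
      define as where "as = map fst ps"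
      have asX: "set as \<subseteq> X" using ps by (auto simp: as_def)
      define R where "R = {ys. \<exists>g\<in>M. list_all2 (\<lambda>x y. y \<in> g x) as ys}"
      have isr: "is_rel X (length ps, R)"
        unfolding is_rel_def tuples_def
      proof clarsimp
        fix ys assume "ys \<in> R"
        then obtain g where g: "g \<in> M" "list_all2 (\<lambda>x y. y \<in> g x) as ys" by (auto simp: R_def)
        have gm: "multiperm X g" using DSM_mp[OF M(1) g(1)] .
        have "length ys = length ps" using list_all2_lengthD[OF g(2)] by (simp add: as_def)
        moreover have "set ys \<subseteq> X"
        proof
          fix y assume "y \<in> set ys"
          then obtain i where i: "i < length ys" "ys ! i = y" by (auto simp: in_set_conv_nth)
          have "y \<in> g (as ! i)" "as ! i \<in> X"
            using g(2) i asX by (auto simp: list_all2_conv_all_nth)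
          then show "y \<in> X" using gm by (auto simp: multiperm_def)
        qed
        ultimately show "length ys = length ps \<and> set ys \<subseteq> X" by simp
      qed
      have "mp_preserves h R" if h: "h \<in> F" for h
        unfolding mp_preserves_def
      proof (intro allI impI)
        fix ys zs assume a: "ys \<in> R \<and> list_all2 (\<lambda>x y. y \<in> h x) ys zs"
        then obtain g where g: "g \<in> M" "list_all2 (\<lambda>x y. y \<in> g x) as ys" by (auto simp: R_def)
        have "list_all2 (\<lambda>x z. z \<in> mp_comp h g x) as zs" using la2_comp2 g(2) a by blast
        moreover have "mp_comp h g \<in> M" using DSM_comp[OF M(1) g(1)] M(2) h by blast
        ultimately show "zs \<in> R" by (auto simp: R_def)
      qed
      then have "(length ps, R) \<in> Inv X F" using isr by (auto simp: Inv_def)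
      then have fp: "mp_preserves f R" using f by (auto simp: shE_def)
      have "as \<in> R"
      proof -
        have "list_all2 (\<lambda>x y. y \<in> mp_id X x) as as"
          using asX by (auto simp: list_all2_conv_all_nth mp_id_def dest: nth_mem)
        then show ?thesis using DSM_id[OF M(1)] unfolding R_def by blast
      qed
      define ys where "ys = map (\<lambda>(x,y). if y \<in> f x then y else (SOME z. z \<in> f x)) ps"
      have la: "list_all2 (\<lambda>x y. y \<in> f x) as ys"
        unfolding list_all2_conv_all_nth
      proof (intro conjI allI impI)
        show "length as = length ys" by (simp add: as_def ys_def)
        fix i assume i: "i < length as"
        obtain x y where p: "ps ! i = (x, y)" by force
        have "x \<in> X" using p i ps by (metis as_def length_map mem_Sigma_iff nth_mem)
        then have "f x \<noteq> {}" using fm by (simp add: multiperm_def)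
        then have "(SOME z. z \<in> f x) \<in> f x" by (simp add: some_in_eq)
        then show "ys ! i \<in> f (as ! i)" using i p by (simp add: as_def ys_def)
      qed
      then have "ys \<in> R" using fp \<open>as \<in> R\<close> by (auto simp: mp_preserves_def)
      then obtain g where g: "g \<in> M" "list_all2 (\<lambda>x y. y \<in> g x) as ys" by (auto simp: R_def)
      have "f x \<subseteq> g x" for x
      proof
        fix y assume y: "y \<in> f x"
        then have "x \<in> X" using fm by (auto simp: multiperm_def)
        moreover have "y \<in> X" using y fm \<open>x \<in> X\<close> by (auto simp: multiperm_def)
        ultimately have "(x, y) \<in> set ps" using ps by simp
        then obtain i where i: "i < length ps" "ps ! i = (x, y)" by (auto simp: in_set_conv_nth)
        have "as ! i = x" "ys ! i = y" using i y by (auto simp: as_def ys_def)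
        then show "y \<in> g x" using g(2) i by (auto simp: list_all2_conv_all_nth as_def)
      qed
      then show "f \<in> M" using DSM_sub[OF M(1) g(1) fm] by blast
    qed
  qed
qed

theorem theorem2p5:
  fixes X :: "'a set"
  assumes "finite X"
  shows "(\<forall>F. (\<forall>\<sigma>\<in>F. \<sigma> permutes X) \<longrightarrow>
            group_gen X F = Aut X (Inv X (perm_to_mp X ` F)))
       \<and> (\<forall>F. (\<forall>f\<in>F. multiperm X f) \<longrightarrow> DSM_gen X F = shE X (Inv X F))"
  using part1[OF assms] part2[OF assms] by blast

end
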